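(* Let $\Gamma$ be the K3 lattice. Then the set of exceptional Kummer points is dense in $Q_\Gamma$.
   Context: The K3 lattice is $\Gamma=2(-E_8)\oplus 3U$, where $U$ is the hyperbolic plane. $Q_\Gamma=\{[x]\in\mathbb P(\Gamma_{\mathbb C}): x^2=0,\ (x+\bar x)^2>0\}$. Each $P\in Q_\Gamma$ is identified with the oriented positive plane $P\subset\Gamma_{\mathbb R}$ spanned by the real and imaginary parts of a representative. A point $P\in Q_\Gamma$ is called exceptional Kummer if the plane $P\subset\Gamma_{\mathbb R}$ is defined over $\mathbb Q$ (i.e. $P\cap\Gamma$ has rank $2$, equivalently $P\in Q_\Gamma\cap\mathbb P(\Gamma\otimes\mathbb Q(i))$) and $x^2\equiv 0 \pmod 4$ for all $x\in P\cap\Gamma$. *)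

theory Defs
  imports Complex_Main
begin

text \<open>Vectors of the K3 lattice and its scalar extensions are modelled as functions
  nat => 'a supported on the index set {..<22} (coordinates 0..21).
  Coordinates 0..7 and 8..15 carry the two copies of -E8, coordinates
  16..21 the three hyperbolic planes U.\<close>

definition E8_adj :: "nat \<Rightarrow> nat \<Rightarrow> bool" where
  "E8_adj i j \<longleftrightarrow> {i, j} \<in> {{0,2}, {2,3}, {3,4}, {4,5}, {5,6}, {6,7}, {1,3}}"

definition E8_gram :: "nat \<Rightarrow> nat \<Rightarrow> int" where
  "E8_gram i j = (if i = j then 2 else if E8_adj i j then -1 else 0)"

definition K3_gram :: "nat \<Rightarrow> nat \<Rightarrow> int" where
  "K3_gram i j =
    (if i < 8 \<and> j < 8 then - E8_gram i j
     else if 8 \<le> i \<and> i < 16 \<and> 8 \<le> j \<and> j < 16 then - E8_gram (i - 8) (j - 8)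
     else if 16 \<le> i \<and> i < 22 \<and> 16 \<le> j \<and> j < 22 then
       (if i \<noteq> j \<and> (i - 16) div 2 = (j - 16) div 2 then 1 else 0)
     else 0)"

text \<open>The (bilinear, not hermitian) extension of the lattice form to any commutative ring.\<close>
definition K3_form :: "(nat \<Rightarrow> 'a::comm_ring_1) \<Rightarrow> (nat \<Rightarrow> 'a) \<Rightarrow> 'a" where
  "K3_form x y = (\<Sum>i<22. \<Sum>j<22. of_int (K3_gram i j) * x i * y j)"

definition supported22 :: "(nat \<Rightarrow> 'a::zero) \<Rightarrow> bool" where
  "supported22 x \<longleftrightarrow> (\<forall>i\<ge>22. x i = 0)"

text \<open>The cone over Q_Gamma in Gamma_C: x^2 = 0 and (x + conj x)^2 > 0.\<close>
definition Q_cone :: "(nat \<Rightarrow> complex) set" where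
  "Q_cone = {x. supported22 x \<and> K3_form x x = 0 \<and>
     K3_form (\<lambda>i. Re (x i + cnj (x i))) (\<lambda>i. Re (x i + cnj (x i))) > (0::real)}"

definition plane_lattice :: "(nat \<Rightarrow> complex) \<Rightarrow> (nat \<Rightarrow> int) set" where
  "plane_lattice x = {v. supported22 v \<and>
     (\<exists>a b :: real. \<forall>i. real_of_int (v i) = a * Re (x i) + b * Im (x i))}"

definition int_lin_indep2 :: "(nat \<Rightarrow> int) \<Rightarrow> (nat \<Rightarrow> int) \<Rightarrow> bool" where
  "int_lin_indep2 u v \<longleftrightarrow> (\<forall>m n :: int. (\<forall>i. m * u i + n * v i = 0) \<longrightarrow> m = 0 \<and> n = 0)"

definition exceptional_kummer :: "(nat \<Rightarrow> complex) \<Rightarrow> bool" where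
  "exceptional_kummer x \<longleftrightarrow>
     (\<exists>u\<in>plane_lattice x. \<exists>v\<in>plane_lattice x. int_lin_indep2 u v) \<and>
     (\<forall>w\<in>plane_lattice x. (4::int) dvd K3_form w w)"

end

theory Submission imports Defs begin

lemma K3_gram_sym: "K3_gram i j = K3_gram j i"
  unfolding K3_gram_def E8_gram_def E8_adj_def by (auto simp: insert_commute)

lemma K3_form_sym: "K3_form x y = K3_form y x"
  unfolding K3_form_def
  by (subst sum.swap) (simp add: K3_gram_sym mult_ac)

lemma K3_add_left: "K3_form (\<lambda>i. x i + y i) z = K3_form x z + K3_form y z"
  unfolding K3_form_def by (simp add: algebra_simps sum.distrib)
lemma K3_add_right: "K3_form z (\<lambda>i. x i + y i) = K3_form z x + K3_form z y"
  unfolding K3_form_def by (simp add: algebra_simps sum.distrib)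
lemma K3_diff_left: "K3_form (\<lambda>i. x i - y i) z = K3_form x z - K3_form y z"
  unfolding K3_form_def by (simp add: algebra_simps sum_subtractf)
lemma K3_diff_right: "K3_form z (\<lambda>i. x i - y i) = K3_form z x - K3_form z y"
  unfolding K3_form_def by (simp add: algebra_simps sum_subtractf)
lemma K3_scale_left: "K3_form (\<lambda>i. c * x i) z = c * K3_form x z"
  unfolding K3_form_def by (simp add: sum_distrib_left algebra_simps)
lemma K3_scale_right: "K3_form z (\<lambda>i. c * x i) = c * K3_form z x"
  unfolding K3_form_def by (simp add: sum_distrib_left algebra_simps)

lemma K3_of_real: "K3_form (\<lambda>i. complex_of_real (x i)) (\<lambda>i. of_real (y i)) = of_real (K3_form x y)"
  unfolding K3_form_def by simp

lemma K3_complex: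
  "K3_form (\<lambda>i. complex_of_real (a i) + \<i> * of_real (b i)) (\<lambda>i. complex_of_real (a i) + \<i> * of_real (b i))
   = Complex (K3_form a a - K3_form b b) (2 * K3_form a b)"
proof -
  have "K3_form (\<lambda>i. complex_of_real (a i) + \<i> * of_real (b i)) (\<lambda>i. complex_of_real (a i) + \<i> * of_real (b i))
    = of_real (K3_form a a) + \<i> * of_real (K3_form a b) + \<i> * of_real (K3_form b a) + \<i> * \<i> * of_real (K3_form b b)"
    by (simp add: K3_add_left K3_add_right K3_scale_left K3_scale_right K3_of_real algebra_simps)
  also have "\<dots> = Complex (K3_form a a - K3_form b b) (2 * K3_form a b)"
    by (simp add: complex_eq_iff K3_form_sym[of b a])
  finally show ?thesis .
qed

lemma K3_delta:
  assumes "k < 22" "l < 22"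
  shows "K3_form (\<lambda>i. if i = k then 1 else 0) (\<lambda>j. if j = l then 1 else 0) = (of_int (K3_gram k l) :: 'a::comm_ring_1)"
proof -
  have h: "\<And>i j. (of_int (K3_gram i j) :: 'a) * (if i = k then 1 else 0) * (if j = l then 1 else 0)
     = (if i = k then (if j = l then of_int (K3_gram k l) else 0) else 0)" by simp
  show ?thesis using assms unfolding K3_form_def h by (simp add: sum.If_cases)
qed

lemma K3_2ae: "K3_form (\<lambda>i. 2 * a i + e i) (\<lambda>i. 2 * b i + f i) =
   4 * K3_form a b + 2 * K3_form a f + 2 * K3_form e b + K3_form e f"
  apply (simp only: K3_add_left K3_add_right)
  apply (simp only: K3_scale_left K3_scale_right)
  by (simp add: algebra_simps)

lemma K3_tendsto:
  fixes f g :: "'b \<Rightarrow> nat \<Rightarrow> real"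
  assumes "\<And>i. ((\<lambda>n. f n i) \<longlongrightarrow> a i) F" "\<And>i. ((\<lambda>n. g n i) \<longlongrightarrow> b i) F"
  shows "((\<lambda>n. K3_form (f n) (g n)) \<longlongrightarrow> K3_form a b) F"
  unfolding K3_form_def by (intro tendsto_intros assms)

lemma floor_lim: "(\<lambda>n. real_of_int \<lfloor>real n * c\<rfloor> / real n) \<longlonglongrightarrow> c"
proof (rule tendsto_sandwich)
  show "\<forall>\<^sub>F n in sequentially. c - 1 / real n \<le> real_of_int \<lfloor>real n * c\<rfloor> / real n"
    using eventually_gt_at_top[of "0::nat"]
  proof eventually_elim
    case (elim n)
    then have "real n * c - 1 \<le> real_of_int \<lfloor>real n * c\<rfloor>" by linarith
    then have "(real n * c - 1) / real n \<le> real_of_int \<lfloor>real n * c\<rfloor> / real n"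
      by (rule divide_right_mono) simp
    moreover have "(real n * c - 1) / real n = c - 1 / real n" using elim by (simp add: field_simps)
    ultimately show ?case by simp
  qed
  show "\<forall>\<^sub>F n in sequentially. real_of_int \<lfloor>real n * c\<rfloor> / real n \<le> c"
    using eventually_gt_at_top[of "0::nat"]
  proof eventually_elim
    case (elim n)
    then have "real_of_int \<lfloor>real n * c\<rfloor> \<le> real n * c" by linarith
    then have "real_of_int \<lfloor>real n * c\<rfloor> / real n \<le> (real n * c) / real n"
      by (rule divide_right_mono) simp
    then show ?case using elim by simp
  qed
  show "(\<lambda>n. c - 1 / real n) \<longlonglongrightarrow> c"
    using tendsto_diff[OF tendsto_const lim_const_over_n[of "1::real"]] by simp
qed simp


lemma key:
  fixes u v :: "nat \<Rightarrow> int" and N lam mu :: real and P Q R :: "nat \<Rightarrow> real" and Y :: "nat \<Rightarrow> complex"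
  assumes N: "N > 0"
  and su: "supported22 u" "supported22 v"
  and par: "odd (u 16)" "even (v 16)" "even (u 18)" "odd (v 18)"
  and Kd: "4 dvd K3_form u u" "4 dvd K3_form v v" "even (K3_form u v)" "even (K3_form v u)"
  and Pd: "\<And>i. P i = real_of_int (u i) / N"
  and Qd: "\<And>i. Q i = real_of_int (v i) / N"
  and lamd: "lam = K3_form P Q / K3_form P P"
  and Rd: "\<And>i. R i = Q i - lam * P i"
  and mud: "mu = sqrt (K3_form P P / K3_form R R)"
  and Yd: "\<And>i. Y i = Complex (P i) (mu * R i)"
  and KPP: "K3_form P P > 0" and KRR: "K3_form R R > 0"
  shows "Y \<in> Q_cone \<and> exceptional_kummer Y"
proof -
  have mu: "mu > 0" using KPP KRR mud by simp
  have mu2: "mu^2 = K3_form P P / K3_form R R" using KPP KRR mud by simp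
  have Rf: "R = (\<lambda>i. Q i - lam * P i)" using Rd by auto
  have KPR: "K3_form P R = 0"
    unfolding Rf K3_diff_right K3_scale_right lamd using KPP by simp
  define S where "S = (\<lambda>i. mu * R i)"
  have KSS: "K3_form S S = K3_form P P"
    unfolding S_def K3_scale_left K3_scale_right using mu2 KRR
    by (simp add: power2_eq_square field_simps)
  have KPS: "K3_form P S = 0" unfolding S_def K3_scale_right KPR by simp
  have Yf: "Y = (\<lambda>i. complex_of_real (P i) + \<i> * of_real (S i))"
    by (rule ext) (simp add: Yd S_def complex_eq_iff)
  have YY: "K3_form Y Y = 0" unfolding Yf K3_complex KSS KPS by (simp add: complex_eq_iff)
  have Ysup: "supported22 Y"
    using su unfolding supported22_def by (simp add: Yd Pd Qd Rd complex_eq_iff)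
  have Re2: "(\<lambda>i. Re (Y i + cnj (Y i))) = (\<lambda>i. 2 * P i)" by (rule ext) (simp add: Yd)
  have Ypos: "K3_form (\<lambda>i. Re (Y i + cnj (Y i))) (\<lambda>i. Re (Y i + cnj (Y i))) > 0"
    unfolding Re2 K3_scale_left K3_scale_right using KPP by simp
  have YQ: "Y \<in> Q_cone" using YY Ysup Ypos by (simp add: Q_cone_def)
  have uin: "u \<in> plane_lattice Y"
    unfolding plane_lattice_def using su N
    apply simp apply (rule exI[of _ N]) apply (rule exI[of _ 0]) by (simp add: Yd Pd)
  have vin: "v \<in> plane_lattice Y"
    unfolding plane_lattice_def using su N mu
    apply simp apply (rule exI[of _ "N * lam"]) apply (rule exI[of _ "N / mu"]) by (simp add: Yd Pd Qd Rd field_simps)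
  define D where "D = u 16 * v 18 - u 18 * v 16"
  have Dodd: "odd D" unfolding D_def using par by simp
  then have D0: "D \<noteq> 0" by auto
  have indep: "int_lin_indep2 u v"
    unfolding int_lin_indep2_def
  proof (intro allI impI)
    fix m n :: int assume h: "\<forall>i. m * u i + n * v i = 0"
    have a: "m * u 16 + n * v 16 = 0" "m * u 18 + n * v 18 = 0" using h by auto
    have "m * D = (m * u 16 + n * v 16) * v 18 - (m * u 18 + n * v 18) * v 16"
      unfolding D_def by (simp add: algebra_simps)
    then have "m * D = 0" using a by simp
    moreover have "n * D = u 16 * (m * u 18 + n * v 18) - u 18 * (m * u 16 + n * v 16)"
      unfolding D_def by (simp add: algebra_simps)
    then have "n * D = 0" using a by simp
    ultimately show "m = 0 \<and> n = 0" using D0 by simp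
  qed
  have div4: "4 dvd K3_form w w" if w: "w \<in> plane_lattice Y" for w
  proof -
    obtain \<alpha> \<beta> :: real where ab: "\<forall>i. real_of_int (w i) = \<alpha> * Re (Y i) + \<beta> * Im (Y i)"
      using w unfolding plane_lattice_def by auto
    define A where "A = (\<alpha> - \<beta> * mu * lam) / N"
    define B where "B = \<beta> * mu / N"
    have hw: "real_of_int (w i) = A * u i + B * v i" for i
      using ab[rule_format, of i] N by (simp add: Yd Pd Qd Rd A_def B_def field_simps)
    define m where "m = w 16 * v 18 - w 18 * v 16"
    define k where "k = u 16 * w 18 - u 18 * w 16"
    have Dw: "(\<lambda>i. D * w i) = (\<lambda>i. m * u i + k * v i)"
    proof (rule ext)
      fix i
      have "real_of_int (D * w i) = real_of_int (m * u i + k * v i)"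
        unfolding D_def m_def k_def of_int_mult of_int_add of_int_diff hw
        by (simp add: algebra_simps)
      then show "D * w i = m * u i + k * v i" by linarith
    qed
    have "K3_form (\<lambda>i. D * w i) (\<lambda>i. D * w i) = D * D * K3_form w w"
      by (simp add: K3_scale_left K3_scale_right)
    moreover have "K3_form (\<lambda>i. m * u i + k * v i) (\<lambda>i. m * u i + k * v i) =
       m * m * K3_form u u + m * k * (K3_form u v + K3_form v u) + k * k * K3_form v v"
      apply (simp only: K3_add_left K3_add_right)
      apply (simp only: K3_scale_left K3_scale_right)
      by (simp add: algebra_simps)
    moreover have "4 dvd m * m * K3_form u u + m * k * (K3_form u v + K3_form v u) + k * k * K3_form v v"
    proof -
      obtain a where a: "K3_form u v = 2 * a" using Kd by (auto elim!: evenE)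
      have "m * k * (K3_form u v + K3_form v u) = 4 * (m * k * a)"
        using a K3_form_sym[of v u] by simp
      have "4 dvd m * m * K3_form u u" "4 dvd k * k * K3_form v v" using Kd by auto
      moreover have "4 dvd m * k * (K3_form u v + K3_form v u)"
        unfolding \<open>m * k * (K3_form u v + K3_form v u) = 4 * (m * k * a)\<close> by (rule dvd_triv_left)
      ultimately show ?thesis by simp
    qed
    ultimately have "4 dvd D * D * K3_form w w" using Dw by simp
    moreover obtain s where "D = 2 * s + 1" using Dodd by (auto elim!: oddE)
    ultimately have "4 dvd (4 * (s * s + s) * K3_form w w + K3_form w w)"
      by (simp add: algebra_simps)
    then show ?thesis by (simp add: dvd_add_right_iff)
  qed
  show ?thesis using YQ uin vin indep div4 unfolding exceptional_kummer_def by blast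
qed


lemma P_lim:
  fixes d :: int
  shows "(\<lambda>n. real_of_int (2 * \<lfloor>real n * c\<rfloor> + d) / (2 * real n)) \<longlonglongrightarrow> c"
proof -
  have e: "real_of_int (2 * \<lfloor>real n * c\<rfloor> + d) / (2 * real n)
     = real_of_int \<lfloor>real n * c\<rfloor> / real n + (real_of_int d / 2) / real n" for n :: nat
    by (simp add: add_divide_distrib)
  show ?thesis unfolding e
    using tendsto_add[OF floor_lim lim_const_over_n[of "real_of_int d / 2"]] by simp
qed

theorem mainTheorem8:
  "\<forall>x\<in>Q_cone. \<forall>\<epsilon>>0. \<exists>y\<in>Q_cone. exceptional_kummer y \<and>
      (\<forall>i<22. cmod (y i - x i) < \<epsilon>)"
proof (intro ballI allI impI)
  fix x :: "nat \<Rightarrow> complex" and \<epsilon> :: real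
  assume x: "x \<in> Q_cone" and \<epsilon>: "\<epsilon> > 0"
  define p where "p = (\<lambda>i. Re (x i))"
  define q where "q = (\<lambda>i. Im (x i))"
  have xpq: "x = (\<lambda>i. complex_of_real (p i) + \<i> * of_real (q i))"
    by (rule ext) (simp add: p_def q_def complex_eq_iff)
  from x have sup: "supported22 x" and x0: "K3_form x x = 0"
    and xpos: "K3_form (\<lambda>i. Re (x i + cnj (x i))) (\<lambda>i. Re (x i + cnj (x i))) > (0::real)"
    by (auto simp: Q_cone_def)
  have "Complex (K3_form p p - K3_form q q) (2 * K3_form p q) = 0"
    using x0 unfolding K3_complex[symmetric] xpq[symmetric] .
  then have pq: "K3_form q q = K3_form p p" "K3_form p q = 0" by (auto simp: complex_eq_iff)
  have e2: "(\<lambda>i. Re (x i + cnj (x i))) = (\<lambda>i. 2 * p i)" by (rule ext) (simp add: p_def)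
  from xpos have "K3_form (\<lambda>i. 2 * p i) (\<lambda>i. 2 * p i) > 0" unfolding e2 .
  then have pp: "K3_form p p > 0" by (simp add: K3_scale_left K3_scale_right)
  have psup: "p i = 0" "q i = 0" if "i \<ge> 22" for i
    using sup that unfolding supported22_def p_def q_def by auto
  define d16 :: "nat \<Rightarrow> int" where "d16 = (\<lambda>i. if i = 16 then 1 else 0)"
  define d18 :: "nat \<Rightarrow> int" where "d18 = (\<lambda>i. if i = 18 then 1 else 0)"
  define U where "U = (\<lambda>(n::nat) i. 2 * \<lfloor>real n * p i\<rfloor> + d16 i)"
  define V where "V = (\<lambda>(n::nat) i. 2 * \<lfloor>real n * q i\<rfloor> + d18 i)"
  define P where "P = (\<lambda>n i. real_of_int (U n i) / (2 * real n))"
  define Q where "Q = (\<lambda>n i. real_of_int (V n i) / (2 * real n))"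
  define lam where "lam = (\<lambda>n. K3_form (P n) (Q n) / K3_form (P n) (P n))"
  define R where "R = (\<lambda>n i. Q n i - lam n * P n i)"
  define mu where "mu = (\<lambda>n. sqrt (K3_form (P n) (P n) / K3_form (R n) (R n)))"
  define Y where "Y = (\<lambda>n i. Complex (P n i) (mu n * R n i))"
  have Pl: "(\<lambda>n. P n i) \<longlonglongrightarrow> p i" for i unfolding P_def U_def by (rule P_lim)
  have Ql: "(\<lambda>n. Q n i) \<longlonglongrightarrow> q i" for i unfolding Q_def V_def by (rule P_lim)
  have KPP: "(\<lambda>n. K3_form (P n) (P n)) \<longlonglongrightarrow> K3_form p p" by (intro K3_tendsto Pl)
  have KPQ: "(\<lambda>n. K3_form (P n) (Q n)) \<longlonglongrightarrow> K3_form p q" by (intro K3_tendsto Pl Ql)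
  have laml: "lam \<longlonglongrightarrow> 0"
    unfolding lam_def using tendsto_divide[OF KPQ KPP] pp pq by simp
  have Rl: "(\<lambda>n. R n i) \<longlonglongrightarrow> q i" for i
    unfolding R_def using tendsto_diff[OF Ql tendsto_mult[OF laml Pl]] by simp
  have KRR: "(\<lambda>n. K3_form (R n) (R n)) \<longlonglongrightarrow> K3_form p p"
    using K3_tendsto[of R q sequentially R q, OF Rl Rl] pq by simp
  have mul: "mu \<longlonglongrightarrow> 1"
    unfolding mu_def using tendsto_real_sqrt[OF tendsto_divide[OF KPP KRR]] pp by simp
  have Yl: "(\<lambda>n. Y n i) \<longlonglongrightarrow> x i" for i
  proof -
    have "(\<lambda>n. Y n i) \<longlonglongrightarrow> Complex (p i) (1 * q i)"
      unfolding Y_def by (intro tendsto_Complex tendsto_mult Pl Rl mul)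
    moreover have "Complex (p i) (1 * q i) = x i" by (simp add: p_def q_def complex_eq_iff)
    ultimately show ?thesis by simp
  qed
  have ev1: "\<forall>\<^sub>F n in sequentially. \<forall>i\<in>{..<22}. cmod (Y n i - x i) < \<epsilon>"
  proof (rule eventually_ball_finite)
    show "\<forall>i\<in>{..<22}. \<forall>\<^sub>F n in sequentially. cmod (Y n i - x i) < \<epsilon>"
      using Yl \<epsilon> by (auto simp: tendsto_iff dist_norm)
  qed simp
  have ev2: "\<forall>\<^sub>F n in sequentially. K3_form (P n) (P n) > 0"
    using order_tendstoD(1)[OF KPP pp] .
  have ev3: "\<forall>\<^sub>F n in sequentially. K3_form (R n) (R n) > 0"
    using order_tendstoD(1)[OF KRR pp] .
  obtain n where n1: "\<forall>i\<in>{..<22}. cmod (Y n i - x i) < \<epsilon>"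
    and n2: "K3_form (P n) (P n) > 0" and n3: "K3_form (R n) (R n) > 0" and n4: "n > 0"
    using eventually_happens'[OF sequentially_bot, OF eventually_conj[OF ev1 eventually_conj[OF ev2 eventually_conj[OF ev3 eventually_gt_at_top[of 0]]]]]
    by blast
  have Kd: "4 dvd K3_form (U n) (U n)" "4 dvd K3_form (V n) (V n)"
     "even (K3_form (U n) (V n))" "even (K3_form (V n) (U n))"
  proof -
    define a where "a = (\<lambda>i. \<lfloor>real n * p i\<rfloor>)"
    define b where "b = (\<lambda>i. \<lfloor>real n * q i\<rfloor>)"
    have Uf: "U n = (\<lambda>i. 2 * a i + d16 i)" unfolding U_def a_def by simp
    have Vf: "V n = (\<lambda>i. 2 * b i + d18 i)" unfolding V_def b_def by simp
    have g: "K3_form d16 d16 = 0" "K3_form d18 d18 = 0" "K3_form d16 d18 = 0" "K3_form d18 d16 = 0"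
      unfolding d16_def d18_def by (simp_all add: K3_delta K3_gram_def)
    have s1: "K3_form d16 a = K3_form a d16" "K3_form d18 b = K3_form b d18" by (rule K3_form_sym)+
    show "4 dvd K3_form (U n) (U n)"
      unfolding Uf K3_2ae g s1 by (simp add: algebra_simps)
    show "4 dvd K3_form (V n) (V n)"
      unfolding Vf K3_2ae g s1 by (simp add: algebra_simps)
    show "even (K3_form (U n) (V n))"
      unfolding Uf Vf K3_2ae g by (simp add: algebra_simps)
    show "even (K3_form (V n) (U n))"
      unfolding Uf Vf K3_2ae g by (simp add: algebra_simps)
  qed
  have "Y n \<in> Q_cone \<and> exceptional_kummer (Y n)"
  proof (rule key[where u = "U n" and v = "V n" and N = "2 * real n" and P = "P n" and Q = "Q n"
        and R = "R n" and lam = "lam n" and mu = "mu n"])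
    show "supported22 (U n)" "supported22 (V n)"
      by (auto simp: supported22_def U_def V_def d16_def d18_def psup)
    show "odd (U n 16)" "even (V n 16)" "even (U n 18)" "odd (V n 18)"
      by (auto simp: U_def V_def d16_def d18_def)
  qed (use n2 n3 n4 Kd in \<open>auto simp: P_def Q_def lam_def R_def mu_def Y_def\<close>)
  then show "\<exists>y\<in>Q_cone. exceptional_kummer y \<and> (\<forall>i<22. cmod (y i - x i) < \<epsilon>)"
    using n1 by auto
qed

end
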